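(* Let $M$ be a finite-dimensional left $\mathsf{VBr}_{r,t}(\omega)$-module with decomposition $M=\bigoplus_{\mathbf a,\mathbf i}1_{\mathbf a}M_{\mathbf i}$. Let $\mathbf a\in\mathrm{Seq}_{r,t}$, $k\in\{1,\dots,r+t-1\}$ with $\mathsf s_k\mathbf a\neq\mathbf a$, and $\mathbf i\in\mathbb C^{r+t}$. Let $I=\{\mathbf i'\in\mathbb C^{r+t}:\mathrm i'_j=\mathrm i_j\text{ for }j\ne k,k+1,\ \mathrm i'_k+\mathrm i'_{k+1}=0\}$. Then $e_k1_{\mathbf a}M_{\mathbf i}=\{0\}$ if $\mathrm i_k+\mathrm i_{k+1}\neq0$, and $e_k1_{\mathbf a}M_{\mathbf i}\subseteq\bigoplus_{\mathbf i'\in I}1_{\mathbf a}M_{\mathbf i'}$ if $\mathrm i_k+\mathrm i_{k+1}=0$; analogously $\hat e_k1_{\mathbf a}M_{\mathbf i}=\{0\}$ if $\mathrm i_k+\mathrm i_{k+1}\ne0$ and $\hat e_k1_{\mathbf a}M_{\mathbf i}\subseteq\bigoplus_{\mathbf i'\in I}1_{\mathsf s_k\mathbf a}M_{\mathbf i'}$ if $\mathrm i_k+\mathrm i_{k+1}=0$.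
   Context: $\mathrm{Seq}_{r,t}$: sequences $\mathbf a\in\{\wedge,\vee\}^{r+t}$ with exactly $r$ entries $\wedge$; $J=\{1,\dots,r+t-1\}$; $\mathsf s_k$ swaps entries $k,k+1$. $\mathrm{Br}_{r,t}(\gamma)$: basis oriented Brauer diagrams $\mathbf a\to\mathbf b$ (perfect matchings between bottom row labelled $\mathbf a$ and top row labelled $\mathbf b$; bottom-to-top strands join equal labels, strands within a row join different labels), product by stacking (second factor below), $0$ if labels mismatch, loops replaced by $\gamma$. $1_{\mathbf a}$ identity; for $k\in J$: if $a_k=a_{k+1}$, $s_k1_{\mathbf a}$ crosses strands $k,k+1$ ($\mathbf a\to\mathbf a$); if $a_k\neq a_{k+1}$, $\hat s_k1_{\mathbf a}$ crossing $\mathbf a\to\mathsf s_k\mathbf a$, $e_k1_{\mathbf a}$ cap at bottom $k,k+1$ and cup at top $k,k+1$ ($\mathbf a\to\mathbf a$), $\hat e_k1_{\mathbf a}$ same shape $\mathbf a\to\mathsf s_k\mathbf a$; these are $0$ when the condition fails; $s_k=\sum_{\mathbf a}s_k1_{\mathbf a}$ etc. For $\omega=(\omega_j)_{j\ge0}\subset\mathbb C$, $\mathsf{VBr}_{r,t}(\omega)$ is the quotient of the free product $\mathrm{Br}_{r,t}(\omega_0)*\mathbb C[y_1,\dots,y_{r+t}]$ by: $y_i$ commutes with all $1_{\mathbf a}$, and with $s_k,\hat s_k,e_k,\hat e_k$ when $i\notin\{k,k+1\}$; $e_1y_1^je_11_{\mathbf a}=\omega_je_11_{\mathbf a}$ for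 $j\ge0$ and $(a_1,a_2)=(\wedge,\vee)$; for $a_k=a_{k+1}$: $s_ky_k1_{\mathbf a}-y_{k+1}s_k1_{\mathbf a}=-1_{\mathbf a}$, $s_ky_{k+1}1_{\mathbf a}-y_ks_k1_{\mathbf a}=1_{\mathbf a}$; $\hat s_ky_k-y_{k+1}\hat s_k=\hat e_k$, $\hat s_ky_{k+1}-y_k\hat s_k=-\hat e_k$; $e_k,\hat e_k$ are annihilated on both sides by $y_k+y_{k+1}$. $1_{\mathbf a}M_{\mathbf i}=\{v\in1_{\mathbf a}M:(y_k-\mathrm i_k)^Nv=0\ \forall k,\ N\gg0\}$. *)

theory Defs
  imports Main "HOL.Complex"
begin

text \<open>Labels: True stands for the up-arrow (wedge), False for the down-arrow (vee).
  A sequence a in Seq r t is a list of length r+t; its entry at position j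
  (1-based, as in the paper) is a ! (j - 1).\<close>

definition Seq :: "nat \<Rightarrow> nat \<Rightarrow> bool list set" where
  "Seq r t = {a. length a = r + t \<and> length (filter id a) = r}"

abbreviation ent :: "bool list \<Rightarrow> nat \<Rightarrow> bool" where
  "ent a j \<equiv> a ! (j - 1)"

definition sw :: "nat \<Rightarrow> nat \<Rightarrow> nat" where
  "sw k j = (if j = k then k + 1 else if j = k + 1 then k else j)"

definition seq_swap :: "nat \<Rightarrow> bool list \<Rightarrow> bool list" where
  "seq_swap k a = map (\<lambda>j. ent a (sw k (j + 1))) [0..<length a]"

section \<open>Oriented Brauer diagrams\<close>

datatype pt = Bot nat | Top nat

definition pts :: "nat \<Rightarrow> pt set" where
  "pts n = Bot ` {1..n} \<union> Top ` {1..n}"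

fun is_bot :: "pt \<Rightarrow> bool" where
  "is_bot (Bot i) = True" | "is_bot (Top i) = False"

fun lab :: "bool list \<Rightarrow> bool list \<Rightarrow> pt \<Rightarrow> bool" where
  "lab a b (Bot i) = ent a i" | "lab a b (Top i) = ent b i"

text \<open>A diagram (a, b, m) from a (bottom row) to b (top row): m is the perfect matching,
  given as a fixed-point-free involution of the 2(r+t) points (identity outside them).\<close>
type_synonym diag = "bool list \<times> bool list \<times> (pt \<Rightarrow> pt)"

definition is_diag :: "nat \<Rightarrow> nat \<Rightarrow> diag \<Rightarrow> bool" where
  "is_diag r t d = (case d of (a, b, m) \<Rightarrow>
     a \<in> Seq r t \<and> b \<in> Seq r t \<and>
     (\<forall>p\<in>pts (r + t). m p \<in> pts (r + t) \<and> m p \<noteq> p \<and> m (m p) = p) \<and>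
     (\<forall>p. p \<notin> pts (r + t) \<longrightarrow> m p = p) \<and>
     (\<forall>p\<in>pts (r + t). (is_bot p = is_bot (m p)) \<longleftrightarrow> lab a b p \<noteq> lab a b (m p)))"

definition Diags :: "nat \<Rightarrow> nat \<Rightarrow> diag set" where
  "Diags r t = {d. is_diag r t d}"

datatype gpt = Lo nat | Mi nat | Up nat

fun emb_low :: "pt \<Rightarrow> gpt" where
  "emb_low (Bot i) = Lo i" | "emb_low (Top i) = Mi i"

fun emb_up :: "pt \<Rightarrow> gpt" where
  "emb_up (Bot i) = Mi i" | "emb_up (Top i) = Up i"

fun outer :: "pt \<Rightarrow> gpt" where
  "outer (Bot i) = Lo i" | "outer (Top i) = Up i"

definition glue_edges :: "nat \<Rightarrow> (pt \<Rightarrow> pt) \<Rightarrow> (pt \<Rightarrow> pt) \<Rightarrow> (gpt \<times> gpt) set" where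
  "glue_edges n m1 m2 =
     {(emb_low p, emb_low (m2 p)) | p. p \<in> pts n} \<union> {(emb_up p, emb_up (m1 p)) | p. p \<in> pts n}"

definition comp_match :: "nat \<Rightarrow> (pt \<Rightarrow> pt) \<Rightarrow> (pt \<Rightarrow> pt) \<Rightarrow> pt \<Rightarrow> pt" where
  "comp_match n m1 m2 p =
     (if p \<in> pts n
      then (THE q. q \<in> pts n \<and> q \<noteq> p \<and> (outer p, outer q) \<in> (glue_edges n m1 m2)\<^sup>*)
      else p)"

text \<open>Number of closed loops: connected components lying entirely in the middle row.\<close>
definition n_loops :: "nat \<Rightarrow> (pt \<Rightarrow> pt) \<Rightarrow> (pt \<Rightarrow> pt) \<Rightarrow> nat" where
  "n_loops n m1 m2 =
     card {C. \<exists>x\<in>Mi ` {1..n}. C = ((glue_edges n m1 m2)\<^sup>*) `` {x} \<and> C \<subseteq> Mi ` {1..n}}"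

text \<open>Stacking d1 (upper, b \<rightarrow> c) on top of d2 (lower, a \<rightarrow> b') when b = b'.\<close>
definition stack :: "nat \<Rightarrow> diag \<Rightarrow> diag \<Rightarrow> diag" where
  "stack n d1 d2 = (case d1 of (b, c, m1) \<Rightarrow> case d2 of (a, b', m2) \<Rightarrow>
     (a, c, comp_match n m1 m2))"

definition loops :: "nat \<Rightarrow> diag \<Rightarrow> diag \<Rightarrow> nat" where
  "loops n d1 d2 = (case d1 of (b, c, m1) \<Rightarrow> case d2 of (a, b', m2) \<Rightarrow> n_loops n m1 m2)"

definition composable :: "diag \<Rightarrow> diag \<Rightarrow> bool" where
  "composable d1 d2 = (fst d1 = fst (snd d2))"

definition restr :: "nat \<Rightarrow> (pt \<Rightarrow> pt) \<Rightarrow> pt \<Rightarrow> pt" where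
  "restr n f p = (if p \<in> pts n then f p else p)"

fun straight :: "pt \<Rightarrow> pt" where
  "straight (Bot i) = Top i" | "straight (Top i) = Bot i"

fun cross_k :: "nat \<Rightarrow> pt \<Rightarrow> pt" where
  "cross_k k (Bot i) = Top (sw k i)" | "cross_k k (Top i) = Bot (sw k i)"

fun capcup_k :: "nat \<Rightarrow> pt \<Rightarrow> pt" where
  "capcup_k k (Bot i) = (if i = k \<or> i = k + 1 then Bot (sw k i) else Top i)"
| "capcup_k k (Top i) = (if i = k \<or> i = k + 1 then Top (sw k i) else Bot i)"

text \<open>1_a, s_k 1_a, \<hat>s_k 1_a, e_k 1_a, \<hat>e_k 1_a (n = length a).\<close>
definition id_d :: "bool list \<Rightarrow> diag" where
  "id_d a = (a, a, restr (length a) straight)"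

definition s_d :: "nat \<Rightarrow> bool list \<Rightarrow> diag" where
  "s_d k a = (a, a, restr (length a) (cross_k k))"

definition sh_d :: "nat \<Rightarrow> bool list \<Rightarrow> diag" where
  "sh_d k a = (a, seq_swap k a, restr (length a) (cross_k k))"

definition e_d :: "nat \<Rightarrow> bool list \<Rightarrow> diag" where
  "e_d k a = (a, a, restr (length a) (capcup_k k))"

definition eh_d :: "nat \<Rightarrow> bool list \<Rightarrow> diag" where
  "eh_d k a = (a, seq_swap k a, restr (length a) (capcup_k k))"

section \<open>Modules over VBr_{r,t}(\<omega>)\<close>

text \<open>s_k = sum over a of s_k 1_a (over those a where the diagram is defined), etc.,
  acting on M through rho.\<close>
definition opS :: "nat \<Rightarrow> nat \<Rightarrow> (diag \<Rightarrow> 'v::ab_group_add \<Rightarrow> 'v) \<Rightarrow> nat \<Rightarrow> 'v \<Rightarrow> 'v" where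
  "opS r t rho k v = (\<Sum>a\<in>{a\<in>Seq r t. ent a k = ent a (k + 1)}. rho (s_d k a) v)"

definition opSh :: "nat \<Rightarrow> nat \<Rightarrow> (diag \<Rightarrow> 'v::ab_group_add \<Rightarrow> 'v) \<Rightarrow> nat \<Rightarrow> 'v \<Rightarrow> 'v" where
  "opSh r t rho k v = (\<Sum>a\<in>{a\<in>Seq r t. ent a k \<noteq> ent a (k + 1)}. rho (sh_d k a) v)"

definition opE :: "nat \<Rightarrow> nat \<Rightarrow> (diag \<Rightarrow> 'v::ab_group_add \<Rightarrow> 'v) \<Rightarrow> nat \<Rightarrow> 'v \<Rightarrow> 'v" where
  "opE r t rho k v = (\<Sum>a\<in>{a\<in>Seq r t. ent a k \<noteq> ent a (k + 1)}. rho (e_d k a) v)"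

definition opEh :: "nat \<Rightarrow> nat \<Rightarrow> (diag \<Rightarrow> 'v::ab_group_add \<Rightarrow> 'v) \<Rightarrow> nat \<Rightarrow> 'v \<Rightarrow> 'v" where
  "opEh r t rho k v = (\<Sum>a\<in>{a\<in>Seq r t. ent a k \<noteq> ent a (k + 1)}. rho (eh_d k a) v)"

text \<open>A finite-dimensional left VBr_{r,t}(omega)-module: a finite-dimensional complex vector
  space (scale, with basis B) together with a unital representation rho of
  Br_{r,t}(omega 0) (given on the diagram basis: linear operators multiplying by the
  stacking rule, with the unit sum of 1_a acting as identity) and commuting linear
  operators Y 1, ..., Y (r+t) (a representation of C[y_1,...,y_{r+t}]) such that the
  defining relations of VBr_{r,t}(omega) hold.\<close>
definition VBr_module ::
  "nat \<Rightarrow> nat \<Rightarrow> (nat \<Rightarrow> complex) \<Rightarrow> (complex \<Rightarrow> 'v::ab_group_add \<Rightarrow> 'v) \<Rightarrow> 'v set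
   \<Rightarrow> (diag \<Rightarrow> 'v \<Rightarrow> 'v) \<Rightarrow> (nat \<Rightarrow> 'v \<Rightarrow> 'v) \<Rightarrow> bool" where
  "VBr_module r t \<omega> scale B rho Y \<longleftrightarrow>
     finite_dimensional_vector_space scale B \<and>
     \<comment> \<open>representation of the oriented Brauer algebra\<close>
     (\<forall>d\<in>Diags r t. Vector_Spaces.linear scale scale (rho d)) \<and>
     (\<forall>d1\<in>Diags r t. \<forall>d2\<in>Diags r t. \<forall>v.
        rho d1 (rho d2 v) =
          (if composable d1 d2
           then scale ((\<omega> 0) ^ loops (r + t) d1 d2) (rho (stack (r + t) d1 d2) v)
           else 0)) \<and>
     (\<forall>v. (\<Sum>a\<in>Seq r t. rho (id_d a) v) = v) \<and>
     \<comment> \<open>representation of the polynomial ring\<close>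
     (\<forall>i\<in>{1..r + t}. Vector_Spaces.linear scale scale (Y i)) \<and>
     (\<forall>i\<in>{1..r + t}. \<forall>j\<in>{1..r + t}. \<forall>v. Y i (Y j v) = Y j (Y i v)) \<and>
     \<comment> \<open>y_i commutes with all 1_a\<close>
     (\<forall>i\<in>{1..r + t}. \<forall>a\<in>Seq r t. \<forall>v. Y i (rho (id_d a) v) = rho (id_d a) (Y i v)) \<and>
     \<comment> \<open>y_i commutes with s_k, hat s_k, e_k, hat e_k for i not in {k, k+1}\<close>
     (\<forall>i\<in>{1..r + t}. \<forall>k\<in>{1..r + t - 1}. i \<noteq> k \<and> i \<noteq> k + 1 \<longrightarrow> (\<forall>v.
        Y i (opS r t rho k v) = opS r t rho k (Y i v) \<and>
        Y i (opSh r t rho k v) = opSh r t rho k (Y i v) \<and>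
        Y i (opE r t rho k v) = opE r t rho k (Y i v) \<and>
        Y i (opEh r t rho k v) = opEh r t rho k (Y i v))) \<and>
     \<comment> \<open>e_1 y_1^j e_1 1_a = omega_j e_1 1_a for (a_1, a_2) = (wedge, vee)\<close>
     (\<forall>j. \<forall>a\<in>Seq r t. ent a 1 \<and> \<not> ent a 2 \<longrightarrow> (\<forall>v.
        opE r t rho 1 ((Y 1 ^^ j) (opE r t rho 1 (rho (id_d a) v))) =
        scale (\<omega> j) (opE r t rho 1 (rho (id_d a) v)))) \<and>
     \<comment> \<open>degenerate affine Hecke type relations for a_k = a_{k+1}\<close>
     (\<forall>k\<in>{1..r + t - 1}. \<forall>a\<in>Seq r t. ent a k = ent a (k + 1) \<longrightarrow> (\<forall>v.
        opS r t rho k (Y k (rho (id_d a) v)) - Y (k + 1) (opS r t rho k (rho (id_d a) v))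
          = - rho (id_d a) v \<and>
        opS r t rho k (Y (k + 1) (rho (id_d a) v)) - Y k (opS r t rho k (rho (id_d a) v))
          = rho (id_d a) v)) \<and>
     \<comment> \<open>relations for hat s_k\<close>
     (\<forall>k\<in>{1..r + t - 1}. \<forall>v.
        opSh r t rho k (Y k v) - Y (k + 1) (opSh r t rho k v) = opEh r t rho k v \<and>
        opSh r t rho k (Y (k + 1) v) - Y k (opSh r t rho k v) = - opEh r t rho k v) \<and>
     \<comment> \<open>e_k and hat e_k are annihilated on both sides by y_k + y_{k+1}\<close>
     (\<forall>k\<in>{1..r + t - 1}. \<forall>v.
        opE r t rho k (Y k v + Y (k + 1) v) = 0 \<and>
        Y k (opE r t rho k v) + Y (k + 1) (opE r t rho k v) = 0 \<and>
        opEh r t rho k (Y k v + Y (k + 1) v) = 0 \<and>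
        Y k (opEh r t rho k v) + Y (k + 1) (opEh r t rho k v) = 0)"

definition wsp ::
  "nat \<Rightarrow> nat \<Rightarrow> (complex \<Rightarrow> 'v::ab_group_add \<Rightarrow> 'v) \<Rightarrow> (diag \<Rightarrow> 'v \<Rightarrow> 'v)
   \<Rightarrow> (nat \<Rightarrow> 'v \<Rightarrow> 'v) \<Rightarrow> bool list \<Rightarrow> (nat \<Rightarrow> complex) \<Rightarrow> 'v set" where
  "wsp r t scale rho Y a i =
     {v. rho (id_d a) v = v \<and>
         (\<forall>k\<in>{1..r + t}. \<exists>N. ((\<lambda>w. Y k w - scale (i k) w) ^^ N) v = 0)}"

end

theory Submission
  imports Defs "HOL-Computational_Algebra.Computational_Algebra" "HOL-Computational_Algebra.Field_as_Ring"
begin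


definition pev :: "('a::comm_ring_1 \<Rightarrow> 'v::ab_group_add \<Rightarrow> 'v) \<Rightarrow> ('v \<Rightarrow> 'v) \<Rightarrow> 'a poly \<Rightarrow> 'v \<Rightarrow> 'v" where
  "pev sc T p w = (\<Sum>j\<le>degree p. sc (coeff p j) ((T ^^ j) w))"

context vector_space begin

lemma pev_bound: "degree p \<le> N \<Longrightarrow> pev scale T p w = (\<Sum>j\<le>N. coeff p j *s (T^^j) w)"
  unfolding pev_def
  by (rule sum.mono_neutral_left) (auto simp: coeff_eq_0)

lemma pev_pCons:
  assumes T: "module_hom scale scale T"
  shows "pev scale T (pCons a p) w = a *s w + T (pev scale T p w)"
proof -
  have "pev scale T (pCons a p) w = (\<Sum>j\<le>Suc (degree p). coeff (pCons a p) j *s (T^^j) w)"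
    by (rule pev_bound) (simp add: degree_pCons_le)
  also have "\<dots> = a *s w + (\<Sum>j\<le>degree p. coeff p j *s (T^^(Suc j)) w)"
    by (subst sum.atMost_Suc_shift) simp
  also have "(\<Sum>j\<le>degree p. coeff p j *s (T^^(Suc j)) w) = T (pev scale T p w)"
    unfolding pev_def by (simp add: module_hom.sum[OF T] module_hom.scale[OF T])
  finally show ?thesis .
qed

lemma pev_0[simp]: "pev scale T 0 w = 0"
  by (simp add: pev_def)

lemma pev_hom:
  assumes T: "module_hom scale scale T"
  shows "pev scale T p (x + y) = pev scale T p x + pev scale T p y"
    "pev scale T p (c *s x) = c *s pev scale T p x"
proof -
  show "pev scale T p (x + y) = pev scale T p x + pev scale T p y"
    by (induction p rule: pCons_induct)
      (simp_all add: pev_pCons[OF T] module_hom.add[OF T] scale_right_distrib algebra_simps)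
  show "pev scale T p (c *s x) = c *s pev scale T p x"
    by (induction p rule: pCons_induct)
      (simp_all add: pev_pCons[OF T] module_hom.scale[OF T] scale_right_distrib algebra_simps)
qed

lemma pev_module_hom:
  assumes T: "module_hom scale scale T"
  shows "module_hom scale scale (pev scale T p)"
  using pev_hom[OF T] T unfolding module_hom_def module_hom_axioms_def by auto

lemma pev_add:
  assumes T: "module_hom scale scale T"
  shows "pev scale T (p + q) w = pev scale T p w + pev scale T q w"
proof (induction p arbitrary: q rule: pCons_induct)
  case (pCons a p)
  show ?case
  proof (cases q rule: pCons_cases)
    case (pCons b q')
    then show ?thesis using pCons.IH[of q']
      by (simp add: pev_pCons[OF T] module_hom.add[OF T] scale_left_distrib algebra_simps add.commute)
  qed
qed simp

lemma pev_smult: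
  assumes T: "module_hom scale scale T"
  shows "pev scale T (smult c p) w = c *s pev scale T p w"
  by (induction p rule: pCons_induct)
    (simp_all add: pev_pCons[OF T] module_hom.scale[OF T] module_hom.zero[OF T] scale_right_distrib)

lemma pev_mult:
  assumes T: "module_hom scale scale T"
  shows "pev scale T (p * q) w = pev scale T p (pev scale T q w)"
proof (induction p rule: pCons_induct)
  case (pCons a p)
  show ?case
    by (simp add: pev_add[OF T] pev_smult[OF T] pev_pCons[OF T] pCons.IH)
qed simp

lemma pev_one[simp]:
  assumes T: "module_hom scale scale T"
  shows "pev scale T 1 w = w"
  by (simp add: one_pCons pev_pCons[OF T] module_hom.zero[OF T])

lemma pev_lin:
  assumes T: "module_hom scale scale T"
  shows "pev scale T [:-l, 1:] w = T w - l *s w"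
  by (simp add: pev_pCons[OF T] module_hom.scale[OF T] module_hom.zero[OF T])

lemma pev_lin_pow:
  assumes T: "module_hom scale scale T"
  shows "pev scale T ([:-l, 1:] ^ m) w = ((\<lambda>x. T x - l *s x) ^^ m) w"
proof (induction m arbitrary: w)
  case (Suc m)
  show ?case by (simp only: power_Suc pev_mult[OF T] Suc pev_lin[OF T] funpow.simps o_apply)
qed (simp add: T)

lemma pev_commute:
  assumes T: "module_hom scale scale T" and S: "module_hom scale scale S"
    and c: "\<And>x. S (T x) = T (S x)"
  shows "S (pev scale T p w) = pev scale T p (S w)"
  by (induction p rule: pCons_induct)
    (simp_all add: pev_pCons[OF T] module_hom.add[OF S] module_hom.scale[OF S] module_hom.zero[OF S] c)


lemma pev_diff:
  assumes T: "module_hom scale scale T"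
  shows "pev scale T (p - q) w = pev scale T p w - pev scale T q w"
  using pev_add[OF T, of "p - q" q w] by (simp add: eq_diff_eq)

lemma pev_sum:
  assumes T: "module_hom scale scale T"
  shows "pev scale T (\<Sum>i\<in>A. f i) w = (\<Sum>i\<in>A. pev scale T (f i) w)"
  by (induction A rule: infinite_finite_induct) (simp_all add: pev_add[OF T])

lemma pev_monom:
  shows "pev scale T (monom c i) w = c *s (T^^i) w"
proof -
  have "pev scale T (monom c i) w = (\<Sum>l\<le>i. coeff (monom c i) l *s (T^^l) w)"
    by (rule pev_bound) (simp add: degree_monom_le)
  also have "\<dots> = (\<Sum>l\<le>i. if l = i then c *s (T^^i) w else 0)"
    by (rule sum.cong) (auto simp: coeff_monom)
  finally show ?thesis by simp
qed

end

context finite_dimensional_vector_space begin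

lemma annihilating:
  assumes T: "module_hom scale scale T"
  shows "\<exists>p. p \<noteq> 0 \<and> pev scale T p w = 0"
proof -
  define f where "f j = (T^^j) w" for j
  define d where "d = card Basis"
  have "\<exists>j\<le>d. f j \<in> span (f ` {..<j})"
  proof (rule ccontr)
    assume H: "\<not> ?thesis"
    have "m \<le> Suc d \<Longrightarrow> independent (f ` {..<m}) \<and> card (f ` {..<m}) = m" for m
    proof (induction m)
      case 0 then show ?case by (simp add: independent_empty)
    next
      case (Suc m)
      then have m: "m \<le> d" "independent (f ` {..<m})" "card (f ` {..<m}) = m" by auto
      have nin: "f m \<notin> span (f ` {..<m})" using H m(1) by blast
      have nin2: "f m \<notin> f ` {..<m}" using nin span_base by metis
      have e: "f ` {..<Suc m} = insert (f m) (f ` {..<m})" by (simp add: lessThan_Suc)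
      show ?case unfolding e using independent_insertI[OF nin m(2)] card_insert_disjoint[OF _ nin2] m(3)
        by simp
    qed
    from this[of "Suc d"] have "independent (f ` {..<Suc d})" "card (f ` {..<Suc d}) = Suc d" by auto
    with independent_span_bound[OF finite_Basis, of "f ` {..<Suc d}"] span_Basis
    show False unfolding d_def by auto
  qed
  then obtain j where j: "j \<le> d" "f j \<in> span (f ` {..<j})" by blast
  have sub: "span (f ` {..<j}) \<subseteq> {x. \<exists>c. x = (\<Sum>i<j. c i *s f i)}"
  proof (rule span_minimal)
    show "f ` {..<j} \<subseteq> {x. \<exists>c. x = (\<Sum>i<j. c i *s f i)}"
    proof clarify
      fix i assume i: "i < j"
      have "(\<Sum>l<j. (if l = i then 1 else 0) *s f l) = (\<Sum>l<j. if l = i then f l else 0)"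
        by (rule sum.cong) auto
      also have "\<dots> = f i" using i by simp
      finally show "\<exists>c. f i = (\<Sum>l<j. c l *s f l)" by metis
    qed
    show "subspace {x. \<exists>c. x = (\<Sum>i<j. c i *s f i)}"
    proof (rule subspaceI)
      show "0 \<in> {x. \<exists>c. x = (\<Sum>i<j. c i *s f i)}"
        by (auto intro!: exI[of _ "\<lambda>_. 0"])
    next
      fix x y assume "x \<in> {x. \<exists>c. x = (\<Sum>i<j. c i *s f i)}" "y \<in> {x. \<exists>c. x = (\<Sum>i<j. c i *s f i)}"
      then obtain c1 c2 where "x = (\<Sum>i<j. c1 i *s f i)" "y = (\<Sum>i<j. c2 i *s f i)" by auto
      then have "x + y = (\<Sum>i<j. (c1 i + c2 i) *s f i)"
        by (simp add: sum.distrib scale_left_distrib)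
      then show "x + y \<in> {x. \<exists>c. x = (\<Sum>i<j. c i *s f i)}"
        by (simp only: mem_Collect_eq) (rule exI[where x="\<lambda>i. c1 i + c2 i"], simp)
    next
      fix c x assume "x \<in> {x. \<exists>c. x = (\<Sum>i<j. c i *s f i)}"
      then obtain c1 where "x = (\<Sum>i<j. c1 i *s f i)" by auto
      then have "c *s x = (\<Sum>i<j. (c * c1 i) *s f i)"
        by (simp add: scale_sum_right)
      then show "c *s x \<in> {x. \<exists>c. x = (\<Sum>i<j. c i *s f i)}"
        by (simp only: mem_Collect_eq) (rule exI[where x="\<lambda>i. c * c1 i"], simp)
    qed
  qed
  with j obtain c where c: "f j = (\<Sum>i<j. c i *s f i)" by blast
  define p where "p = monom 1 j - (\<Sum>i<j. monom (c i) i)"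
  have "coeff p j = 1" unfolding p_def by (simp add: coeff_sum coeff_monom)
  then have "p \<noteq> 0" by auto
  moreover have "pev scale T p w = 0"
  proof -
    have "pev scale T p w = f j - (\<Sum>i<j. c i *s f i)"
      unfolding p_def f_def by (simp only: pev_diff[OF T] pev_sum[OF T] pev_monom scale_one)
    then show ?thesis using c by simp
  qed
  ultimately show ?thesis by blast
qed

end

lemma decomp:
  fixes sc :: "complex \<Rightarrow> 'v::ab_group_add \<Rightarrow> 'v"
  assumes V: "vector_space sc" and T: "module_hom sc sc T"
  shows "p \<noteq> 0 \<Longrightarrow> pev sc T p w = 0 \<Longrightarrow>
    w \<in> module.span sc {u. (\<exists>q. u = pev sc T q w) \<and> (\<exists>l m. ((\<lambda>x. T x - sc l x)^^m) u = 0)}"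
proof (induction "degree p" arbitrary: p w rule: less_induct)
  case less
  interpret V: vector_space sc by (rule V)
  show ?case
  proof (cases "degree p = 0")
    case True
    define c where "c = coeff p 0"
    have "p = [:c:]" using True unfolding c_def by (rule degree_eq_zeroE) simp
    with less.prems have c0: "c \<noteq> 0" by auto
    have "pev sc T p w = sc c w" using True unfolding pev_def c_def by simp
    with less.prems have "sc c w = 0" by simp
    then have "sc (inverse c) (sc c w) = 0" by simp
    with c0 have "w = 0" by simp
    then show ?thesis by (simp add: V.span_zero)
  next
    case False
    then have "\<not> constant (poly p)" by (simp add: constant_degree)
    from fundamental_theorem_of_algebra[OF this] obtain l where l: "poly p l = 0" by blast
    from order_decomp[OF less.prems(1), of l] obtain g where
      g: "p = [:-l, 1:] ^ order l p * g" "\<not> [:-l, 1:] dvd g" by blast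
    define ord where "ord = order l p"
    have o0: "ord \<noteq> 0" using l less.prems(1) order_root[of p l] unfolding ord_def by auto
    define h where "h = [:-l, 1:] ^ ord"
    have pg: "p = h * g" using g(1) unfolding h_def ord_def by simp
    have "coprime [:-l, 1:] g"
      by (rule prime_elem_imp_coprime[OF _ g(2)], rule prime_elem_linear_field_poly) simp
    then have "coprime h g" unfolding h_def by (simp add: coprime_power_left_iff)
    then have "gcd h g = 1" by simp
    then obtain u v where uv: "u * h + v * g = 1"
      using bezout_coefficients_fst_snd[of h g] by metis
    have g0: "g \<noteq> 0" using less.prems(1) pg by auto
    have h0: "h \<noteq> 0" unfolding h_def by simp
    have degh: "degree h = ord" unfolding h_def by (simp add: degree_linear_power)
    have dg: "degree g < degree p" using pg degree_mult_eq[OF h0 g0] degh o0 by simp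
    define G where "G = {u. (\<exists>q. u = pev sc T q w) \<and> (\<exists>l m. ((\<lambda>x. T x - sc l x)^^m) u = 0)}"
    define w1 where "w1 = pev sc T (u * h) w"
    define w2 where "w2 = pev sc T (v * g) w"
    have ww: "w = w1 + w2"
      unfolding w1_def w2_def
      by (simp add: V.pev_add[OF T, symmetric] distrib_right[symmetric] uv V.pev_one[OF T])
    have "((\<lambda>x. T x - sc l x)^^ord) w2 = pev sc T h w2"
      unfolding h_def by (simp add: V.pev_lin_pow[OF T])
    also have "\<dots> = pev sc T (v * p) w"
      unfolding w2_def V.pev_mult[OF T, symmetric] pg by (simp add: ac_simps)
    also have "\<dots> = 0"
      by (simp add: V.pev_mult[OF T] less.prems(2) module_hom.zero[OF V.pev_module_hom[OF T]])
    finally have "w2 \<in> G" unfolding G_def w2_def by blast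
    then have s2: "w2 \<in> module.span sc G" by (rule V.span_base)
    have "pev sc T g w1 = pev sc T (u * p) w"
      unfolding w1_def V.pev_mult[OF T, symmetric] pg by (simp add: ac_simps)
    also have "\<dots> = 0"
      by (simp add: V.pev_mult[OF T] less.prems(2) module_hom.zero[OF V.pev_module_hom[OF T]])
    finally have "w1 \<in> module.span sc {x. (\<exists>q. x = pev sc T q w1) \<and> (\<exists>l m. ((\<lambda>x. T x - sc l x)^^m) x = 0)}"
      using less.hyps[OF dg g0] by blast
    moreover have "{x. (\<exists>q. x = pev sc T q w1) \<and> (\<exists>l m. ((\<lambda>x. T x - sc l x)^^m) x = 0)} \<subseteq> G"
      unfolding G_def w1_def by (auto simp: V.pev_mult[OF T, symmetric])
    ultimately have s1: "w1 \<in> module.span sc G" using V.span_mono by blast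
    have "w1 + w2 \<in> module.span sc G" by (rule V.span_add[OF s1 s2])
    then show ?thesis unfolding G_def using ww by simp
  qed
qed



context vector_space begin

lemma mh_iff: "module_hom scale scale f \<longleftrightarrow> (\<forall>x y. f (x + y) = f x + f y) \<and> (\<forall>c x. f (c *s x) = c *s f x)"
  unfolding module_hom_def module_hom_axioms_def
  using module_iff_vector_space vector_space_axioms by auto

lemma mh_funpow: "module_hom scale scale f \<Longrightarrow> module_hom scale scale (f^^n)"
proof (induction n)
  case 0 then show ?case by (simp add: mh_iff)
next
  case (Suc n) then show ?case
    by (simp add: mh_iff module_hom.add[OF Suc.prems] module_hom.scale[OF Suc.prems])
qed

lemma mh_shift: "module_hom scale scale f \<Longrightarrow> module_hom scale scale (\<lambda>x. f x - c *s x)"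
  by (simp add: mh_iff module_hom.add module_hom.scale scale_right_distrib algebra_simps)

lemma comm_funpow: "(\<And>x. f (g x) = g (f x)) \<Longrightarrow> (f^^n) (g x) = g ((f^^n) x)"
  by (induction n) auto

lemma comm_shift: "module_hom scale scale g \<Longrightarrow> (\<And>x. f (g x) = g (f x)) \<Longrightarrow>
    f (g x) - c *s g x = g (f x - c *s x)"
  by (simp add: module_hom.diff module_hom.scale)

lemma funpow_zero: "module_hom scale scale f \<Longrightarrow> (f^^n) 0 = 0"
  using module_hom.zero[OF mh_funpow] by blast

lemma shift_comm:
  assumes A0: "module_hom scale scale A0" and B0: "module_hom scale scale B0"
    and comm: "\<And>x. A0 (B0 x) = B0 (A0 x)"
  shows "A0 (B0 x - b *s x) - a *s (B0 x - b *s x) = B0 (A0 x - a *s x) - b *s (A0 x - a *s x)"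
  by (simp add: module_hom.diff[OF A0] module_hom.diff[OF B0] module_hom.scale[OF A0]
      module_hom.scale[OF B0] comm scale_right_diff_distrib algebra_simps)

lemma partA:
  assumes F: "module_hom scale scale F" and A0: "module_hom scale scale A0"
    and B0: "module_hom scale scale B0"
    and comm: "\<And>x. A0 (B0 x) = B0 (A0 x)" and ann: "\<And>x. F (A0 x + B0 x) = 0"
    and c: "ia + ib \<noteq> 0"
  shows "((\<lambda>w. A0 w - ia *s w)^^p) u = 0 \<Longrightarrow> ((\<lambda>w. B0 w - ib *s w)^^q) u = 0 \<Longrightarrow> F u = 0"
proof (induction "p+q" arbitrary: p q u rule: less_induct)
  case less
  define A where "A = (\<lambda>w. A0 w - ia *s w)"
  define B where "B = (\<lambda>w. B0 w - ib *s w)"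
  have mA: "module_hom scale scale A" unfolding A_def by (rule mh_shift[OF A0])
  have mB: "module_hom scale scale B" unfolding B_def by (rule mh_shift[OF B0])
  have AB: "A (B x) = B (A x)" for x unfolding A_def B_def by (rule shift_comm[OF A0 B0 comm])
  show ?case
  proof (cases "p = 0 \<or> q = 0")
    case True
    with less.prems have "u = 0" by auto
    then show ?thesis by (simp add: module_hom.zero[OF F])
  next
    case False
    then obtain p' q' where pq: "p = Suc p'" "q = Suc q'" by (metis not0_implies_Suc)
    have "(A^^p') (A u) = 0" using less.prems(1) unfolding pq A_def[symmetric] by (simp add: funpow_swap1)
    moreover have "(B^^q) (A u) = 0"
      using less.prems(2) unfolding B_def[symmetric] comm_funpow[of B A, OF AB[symmetric]]
      by (simp add: module_hom.zero[OF mA])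
    ultimately have FA: "F (A u) = 0"
      using less.hyps[of p' q "A u"] unfolding A_def B_def pq by simp
    have "(B^^q') (B u) = 0" using less.prems(2) unfolding pq B_def[symmetric] by (simp add: funpow_swap1)
    moreover have "(A^^p) (B u) = 0"
      using less.prems(1) unfolding A_def[symmetric] comm_funpow[of A B, OF AB]
      by (simp add: module_hom.zero[OF mB])
    ultimately have FB: "F (B u) = 0"
      using less.hyps[of p q' "B u"] unfolding A_def B_def pq by simp
    have "A u + B u = (A0 u + B0 u) - (ia + ib) *s u"
      unfolding A_def B_def by (simp add: scale_left_distrib algebra_simps)
    then have "F (A u) + F (B u) = - ((ia + ib) *s F u)"
      by (simp add: module_hom.add[OF F, symmetric] module_hom.diff[OF F] module_hom.scale[OF F] ann)
    with FA FB c show ?thesis by simp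
  qed
qed

end


lemma (in vector_space) neg_shift:
  assumes Ya: "module_hom scale scale Ya" and Yb: "module_hom scale scale Yb"
    and comm: "\<And>x. Ya (Yb x) = Yb (Ya x)"
  shows "Yb u = - Ya u \<Longrightarrow> ((\<lambda>x. Ya x - l *s x)^^m) u = 0 \<Longrightarrow> ((\<lambda>x. Yb x - (-l) *s x)^^m) u = 0"
proof (induction m arbitrary: u)
  case 0 then show ?case by simp
next
  case (Suc m)
  define A where "A = (\<lambda>x. Ya x - l *s x)"
  define B where "B = (\<lambda>x. Yb x - (-l) *s x)"
  have BA: "B u = - A u" unfolding A_def B_def using Suc.prems(1) by simp
  have Au: "Yb (A u) = - Ya (A u)" unfolding A_def
    by (simp add: module_hom.diff[OF Ya] module_hom.diff[OF Yb] module_hom.scale[OF Ya]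
        module_hom.scale[OF Yb] Suc.prems(1) comm[symmetric] module_hom.neg[OF Ya])
  have "(A^^m) (A u) = 0" using Suc.prems(2) unfolding A_def[symmetric] by (simp add: funpow_swap1)
  then have BmA: "(B^^m) (A u) = 0" using Suc.IH[OF Au] unfolding A_def B_def by simp
  have mB: "module_hom scale scale (B^^m)" unfolding B_def by (intro mh_funpow mh_shift Yb)
  have "(B^^Suc m) u = (B^^m) (B u)" by (simp only: funpow_Suc_right o_apply)
  also have "\<dots> = - (B^^m) (A u)" by (simp add: BA module_hom.neg[OF mB])
  finally have "(B^^Suc m) u = 0" using BmA by simp
  then show ?case unfolding B_def .
qed

lemma partB:
  fixes sc :: "complex \<Rightarrow> 'v::ab_group_add \<Rightarrow> 'v" and n k :: nat
  assumes FD: "finite_dimensional_vector_space sc Bs"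
    and Ylin: "\<And>j. j \<in> {1..n} \<Longrightarrow> module_hom sc sc (Y j)"
    and Ycomm: "\<And>j j' x. j \<in> {1..n} \<Longrightarrow> j' \<in> {1..n} \<Longrightarrow> Y j (Y j' x) = Y j' (Y j x)"
    and P: "module_hom sc sc P" and PY: "\<And>x. P (Y k x) = Y k (P x)"
    and k: "1 \<le> k" "k + 1 \<le> n"
    and wP: "P w = w"
    and wj: "\<And>j. j \<in> {1..n} - {k, k+1} \<Longrightarrow> \<exists>N. ((\<lambda>x. Y j x - sc (i j) x)^^N) w = 0"
    and wk: "Y k w + Y (k+1) w = 0"
  shows "w \<in> module.span sc {u. \<exists>l. P u = u \<and>
            (\<forall>j\<in>{1..n}. \<exists>N. ((\<lambda>x. Y j x - sc ((i(k:=l, k+1:=-l)) j) x)^^N) u = 0)}"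
proof -
  interpret V: finite_dimensional_vector_space sc Bs by (rule FD)
  have kn: "k \<in> {1..n}" "k+1 \<in> {1..n}" using k by auto
  note T = Ylin[OF kn(1)]
  note T1 = Ylin[OF kn(2)]
  obtain p where p: "p \<noteq> 0" "pev sc (Y k) p w = 0" using V.annihilating[OF T] by blast
  have wG: "w \<in> module.span sc {u. (\<exists>q. u = pev sc (Y k) q w) \<and> (\<exists>l m. ((\<lambda>x. Y k x - sc l x)^^m) u = 0)}"
    by (rule decomp[OF V.vector_space_axioms T p])
  show ?thesis
  proof (rule set_mp[OF V.span_mono wG], safe)
    fix q l m
    assume lm: "((\<lambda>x. Y k x - sc l x)^^m) (pev sc (Y k) q w) = 0"
    define u where "u = pev sc (Y k) q w"
    define i' where "i' = i(k:=l, k+1:=-l)"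
    have Pu: "P u = u" unfolding u_def by (simp add: V.pev_commute[OF T P PY] wP)
    have "Y (k+1) u = - Y k u"
    proof -
      have "Y (k+1) u = pev sc (Y k) q (Y (k+1) w)"
        unfolding u_def by (rule V.pev_commute[OF T T1]) (rule Ycomm[OF kn(2) kn(1)])
      also have "Y (k+1) w = - Y k w" using wk by (simp add: eq_neg_iff_add_eq_0 add.commute)
      also have "pev sc (Y k) q (- Y k w) = - pev sc (Y k) q (Y k w)"
        by (rule module_hom.neg[OF V.pev_module_hom[OF T]])
      also have "pev sc (Y k) q (Y k w) = Y k u"
        unfolding u_def by (rule V.pev_commute[OF T T, symmetric]) simp
      finally show ?thesis .
    qed
    have "\<exists>N. ((\<lambda>x. Y j x - sc (i' j) x)^^N) u = 0" if j: "j \<in> {1..n}" for j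
    proof -
      consider "j = k" | "j = k + 1" | "j \<in> {1..n} - {k, k+1}" using j by auto
      then show ?thesis
      proof cases
        case 1
        then show ?thesis using lm unfolding u_def i'_def by auto
      next
        case 2
        have "((\<lambda>x. Y (k+1) x - sc (-l) x)^^m) u = 0"
          by (rule V.neg_shift[OF T T1 Ycomm[OF kn(1) kn(2)] \<open>Y (k+1) u = - Y k u\<close>])
            (use lm in \<open>simp add: u_def\<close>)
        then show ?thesis using 2 unfolding i'_def by auto
      next
        case 3
        obtain N where N: "((\<lambda>x. Y j x - sc (i j) x)^^N) w = 0" using wj[OF 3] by blast
        define S where "S = ((\<lambda>x. Y j x - sc (i j) x)^^N)"
        have jn: "j \<in> {1..n}" using 3 by auto
        have mS: "module_hom sc sc S" unfolding S_def by (intro V.mh_funpow V.mh_shift Ylin jn)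
        have cS: "S (Y k x) = Y k (S x)" for x
          unfolding S_def
          by (rule V.comm_funpow, rule V.comm_shift[OF T]) (rule Ycomm[OF jn kn(1)])
        have "S u = 0" unfolding u_def using V.pev_commute[OF T mS cS] N
          by (simp add: S_def module_hom.zero[OF V.pev_module_hom[OF T]])
        moreover have "i' j = i j" using 3 unfolding i'_def by auto
        ultimately show ?thesis unfolding S_def by auto
      qed
    qed
    then show "\<exists>l'. P (pev sc (Y k) q w) = pev sc (Y k) q w \<and>
            (\<forall>j\<in>{1..n}. \<exists>N. ((\<lambda>x. Y j x - sc ((i(k:=l', k+1:=-l')) j) x)^^N) (pev sc (Y k) q w) = 0)"
      using Pu unfolding u_def i'_def by blast
  qed
qed



lemma seq_swap_len[simp]: "length (seq_swap k a) = length a"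
  by (simp add: seq_swap_def)

lemma seq_swap_ent: "1 \<le> i \<Longrightarrow> i \<le> length a \<Longrightarrow> ent (seq_swap k a) i = ent a (sw k i)"
proof -
  assume i: "1 \<le> i" "i \<le> length a"
  then have "[0..<length a] ! (i - 1) = i - 1" by (simp add: nth_upt)
  with i show ?thesis by (simp add: seq_swap_def)
qed

lemma seq_swap_nth: "x < length a \<Longrightarrow> seq_swap k a ! x = a ! (sw k (x + 1) - 1)"
  by (simp add: seq_swap_def)

lemma sw_sw[simp]: "sw k (sw k i) = i"
  by (simp add: sw_def)

lemma finite_Seq: "finite (Seq r t)"
proof -
  have "Seq r t \<subseteq> {xs. set xs \<subseteq> UNIV \<and> length xs = r + t}" by (auto simp: Seq_def)
  moreover have "finite {xs :: bool list. set xs \<subseteq> UNIV \<and> length xs = r + t}"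
    by (rule finite_lists_length_eq) simp
  ultimately show ?thesis by (rule finite_subset)
qed

lemma seq_swap_Seq:
  assumes a: "a \<in> Seq r t" and k: "1 \<le> k" "k + 1 \<le> r + t"
  shows "seq_swap k a \<in> Seq r t"
proof -
  have la: "length a = r + t" using a by (simp add: Seq_def)
  have e: "seq_swap k a = a[k - 1 := a ! k, k := a ! (k - 1)]"
  proof (rule nth_equalityI)
    show "length (seq_swap k a) = length (a[k - 1 := a ! k, k := a ! (k - 1)])" by simp
    fix x assume "x < length (seq_swap k a)"
    then have x: "x < length a" by simp
    show "seq_swap k a ! x = a[k - 1 := a ! k, k := a ! (k - 1)] ! x"
      using x k la by (auto simp: seq_swap_def sw_def nth_list_update)
  qed
  have "mset (seq_swap k a) = mset a" unfolding e
    by (rule mset_swap) (use k la in auto)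
  then have "length (filter id (seq_swap k a)) = length (filter id a)"
    by (metis mset_filter size_mset)
  then show ?thesis using a by (simp add: Seq_def)
qed

lemma id_Diags: "a \<in> Seq r t \<Longrightarrow> id_d a \<in> Diags r t"
  by (auto simp: Diags_def is_diag_def id_d_def restr_def pts_def Seq_def)

lemma e_Diags:
  assumes a: "a \<in> Seq r t" and k: "1 \<le> k" "k + 1 \<le> r + t" and ak: "ent a k \<noteq> ent a (k + 1)"
  shows "e_d k a \<in> Diags r t"
proof -
  have la: "length a = r + t" using a by (simp add: Seq_def)
  show ?thesis
    using a k ak la
    by (auto simp: Diags_def is_diag_def e_d_def restr_def pts_def sw_def split: if_splits)
qed

lemma eh_Diags:
  assumes a: "a \<in> Seq r t" and k: "1 \<le> k" "k + 1 \<le> r + t" and ak: "ent a k \<noteq> ent a (k + 1)"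
  shows "eh_d k a \<in> Diags r t"
proof -
  have la: "length a = r + t" using a by (simp add: Seq_def)
  show ?thesis
    using a k ak la seq_swap_Seq[OF a k]
    by (auto simp: Diags_def is_diag_def eh_d_def restr_def pts_def sw_def seq_swap_nth split: if_splits)
qed



theorem lemma3p2:
  fixes r t :: nat and \<omega> :: "nat \<Rightarrow> complex"
    and scale :: "complex \<Rightarrow> 'v::ab_group_add \<Rightarrow> 'v" and B :: "'v set"
    and rho :: "diag \<Rightarrow> 'v \<Rightarrow> 'v" and Y :: "nat \<Rightarrow> 'v \<Rightarrow> 'v"
    and a :: "bool list" and k :: nat and i :: "nat \<Rightarrow> complex"
  assumes M: "VBr_module r t \<omega> scale B rho Y"
    and a: "a \<in> Seq r t"
    and k: "k \<in> {1..r + t - 1}"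
    and sk: "seq_swap k a \<noteq> a"
  defines "I \<equiv> {i'. (\<forall>j\<in>{1..r + t} - {k, k + 1}. i' j = i j) \<and> i' k + i' (k + 1) = 0}"
  shows "(i k + i (k + 1) \<noteq> 0 \<longrightarrow>
            (\<forall>v\<in>wsp r t scale rho Y a i. rho (e_d k a) v = 0) \<and>
            (\<forall>v\<in>wsp r t scale rho Y a i. rho (eh_d k a) v = 0))
       \<and> (i k + i (k + 1) = 0 \<longrightarrow>
            (\<forall>v\<in>wsp r t scale rho Y a i.
               rho (e_d k a) v \<in> module.span scale (\<Union>i'\<in>I. wsp r t scale rho Y a i')) \<and>
            (\<forall>v\<in>wsp r t scale rho Y a i.
               rho (eh_d k a) v \<in> module.span scale (\<Union>i'\<in>I. wsp r t scale rho Y (seq_swap k a) i')))"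
proof -
  define n where "n = r + t"
  have FD: "finite_dimensional_vector_space scale B" using M by (simp add: VBr_module_def)
  interpret V: finite_dimensional_vector_space scale B by (rule FD)
  have lin: "\<And>d. d \<in> Diags r t \<Longrightarrow> module_hom scale scale (rho d)"
    using M by (simp add: VBr_module_def module_hom_iff_linear)
  have comp: "\<And>d1 d2 v. d1 \<in> Diags r t \<Longrightarrow> d2 \<in> Diags r t \<Longrightarrow> \<not> composable d1 d2 \<Longrightarrow> rho d1 (rho d2 v) = 0"
    using M by (simp add: VBr_module_def)
  have unit: "\<And>v. (\<Sum>a\<in>Seq r t. rho (id_d a) v) = v"
    using M by (simp add: VBr_module_def)
  have Ylin: "\<And>j. j \<in> {1..n} \<Longrightarrow> module_hom scale scale (Y j)"
    using M by (simp add: VBr_module_def module_hom_iff_linear n_def)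
  have Ycomm: "\<And>j j' x. j \<in> {1..n} \<Longrightarrow> j' \<in> {1..n} \<Longrightarrow> Y j (Y j' x) = Y j' (Y j x)"
    using M unfolding VBr_module_def n_def by blast
  have Yid: "\<And>j b x. j \<in> {1..n} \<Longrightarrow> b \<in> Seq r t \<Longrightarrow> rho (id_d b) (Y j x) = Y j (rho (id_d b) x)"
    using M unfolding VBr_module_def n_def by metis
  have kk: "k \<in> {1..r + t - 1}" by (rule k)
  have Yops: "\<And>j x. j \<in> {1..n} \<Longrightarrow> j \<noteq> k \<Longrightarrow> j \<noteq> k + 1 \<Longrightarrow>
      Y j (opE r t rho k x) = opE r t rho k (Y j x) \<and> Y j (opEh r t rho k x) = opEh r t rho k (Y j x)"
    using M kk unfolding VBr_module_def n_def by blast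
  have ann: "\<And>x. opE r t rho k (Y k x + Y (k + 1) x) = 0 \<and>
        Y k (opE r t rho k x) + Y (k + 1) (opE r t rho k x) = 0 \<and>
        opEh r t rho k (Y k x + Y (k + 1) x) = 0 \<and>
        Y k (opEh r t rho k x) + Y (k + 1) (opEh r t rho k x) = 0"
    using M kk unfolding VBr_module_def by blast
  have k1: "1 \<le> k" "k + 1 \<le> n" using k unfolding n_def by auto
  have kn: "k \<in> {1..n}" "k + 1 \<in> {1..n}" using k1 by auto
  have la: "length a = n" using a by (simp add: Seq_def n_def)
  have ak: "ent a k \<noteq> ent a (k + 1)"
  proof
    assume eq: "ent a k = ent a (k + 1)"
    have "seq_swap k a = a"
    proof (rule nth_equalityI)
      fix x assume "x < length (seq_swap k a)"
      then have x: "x < length a" by simp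
      show "seq_swap k a ! x = a ! x"
        using x eq k1 by (auto simp: seq_swap_nth sw_def)
    qed simp
    with sk show False by simp
  qed
  have finS: "finite {a' \<in> Seq r t. ent a' k \<noteq> ent a' (k + 1)}"
    using finite_Seq by auto
  have DE: "\<And>a'. a' \<in> Seq r t \<Longrightarrow> ent a' k \<noteq> ent a' (k + 1) \<Longrightarrow> e_d k a' \<in> Diags r t"
    using e_Diags k1 unfolding n_def by blast
  have DEh: "\<And>a'. a' \<in> Seq r t \<Longrightarrow> ent a' k \<noteq> ent a' (k + 1) \<Longrightarrow> eh_d k a' \<in> Diags r t"
    using eh_Diags k1 unfolding n_def by blast
  have Did: "\<And>b. b \<in> Seq r t \<Longrightarrow> id_d b \<in> Diags r t" by (rule id_Diags)
  have ssa: "seq_swap k a \<in> Seq r t" using seq_swap_Seq[OF a] k1 unfolding n_def by blast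
  have single: "(\<Sum>a'\<in>{a' \<in> Seq r t. ent a' k \<noteq> ent a' (k + 1)}. rho (dk a') v) = rho (dk a) v"
    if D: "\<And>a'. a' \<in> Seq r t \<Longrightarrow> ent a' k \<noteq> ent a' (k + 1) \<Longrightarrow> dk a' \<in> Diags r t \<and> fst (dk a') = a'"
      and v: "rho (id_d a) v = v" for dk v
  proof -
    have "(\<Sum>a'\<in>{a' \<in> Seq r t. ent a' k \<noteq> ent a' (k + 1)}. rho (dk a') v)
        = (\<Sum>a'\<in>{a' \<in> Seq r t. ent a' k \<noteq> ent a' (k + 1)}. if a' = a then rho (dk a) v else 0)"
    proof (rule sum.cong)
      fix a' assume a': "a' \<in> {a' \<in> Seq r t. ent a' k \<noteq> ent a' (k + 1)}"
      show "rho (dk a') v = (if a' = a then rho (dk a) v else 0)"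
      proof (cases "a' = a")
        case False
        have "rho (dk a') v = rho (dk a') (rho (id_d a) v)" using v by simp
        also have "\<dots> = 0"
          by (rule comp) (use D a' Did[OF a] False in \<open>auto simp: composable_def id_d_def\<close>)
        finally show ?thesis using False by simp
      qed simp
    qed simp
    also have "\<dots> = rho (dk a) v" using finS a ak by simp
    finally show ?thesis .
  qed
  have tgt: "rho (id_d b) (rho d w) = rho d w"
    if d: "d \<in> Diags r t" and b: "fst (snd d) = b" "b \<in> Seq r t" for d b w
  proof -
    have "rho d w = (\<Sum>a''\<in>Seq r t. rho (id_d a'') (rho d w))" using unit by simp
    also have "\<dots> = (\<Sum>a''\<in>Seq r t. if a'' = b then rho (id_d b) (rho d w) else 0)"
    proof (rule sum.cong)
      fix a'' assume a'': "a'' \<in> Seq r t"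
      show "rho (id_d a'') (rho d w) = (if a'' = b then rho (id_d b) (rho d w) else 0)"
        using comp[OF Did[OF a''] d, of w] b by (auto simp: composable_def id_d_def)
    qed simp
    also have "\<dots> = rho (id_d b) (rho d w)" using finite_Seq b by simp
    finally show ?thesis by simp
  qed
  have ophom: "module_hom scale scale (\<lambda>x. \<Sum>a'\<in>{a' \<in> Seq r t. ent a' k \<noteq> ent a' (k + 1)}. rho (dk a') x)"
    if D: "\<And>a'. a' \<in> Seq r t \<Longrightarrow> ent a' k \<noteq> ent a' (k + 1) \<Longrightarrow> dk a' \<in> Diags r t" for dk
    unfolding V.mh_iff
    by (auto simp: module_hom.add[OF lin[OF D]] module_hom.scale[OF lin[OF D]] sum.distrib V.scale_sum_right
        intro!: sum.cong)
  have opE_eq: "opE r t rho k = (\<lambda>x. \<Sum>a'\<in>{a' \<in> Seq r t. ent a' k \<noteq> ent a' (k + 1)}. rho (e_d k a') x)"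
    by (simp add: opE_def fun_eq_iff)
  have opEh_eq: "opEh r t rho k = (\<lambda>x. \<Sum>a'\<in>{a' \<in> Seq r t. ent a' k \<noteq> ent a' (k + 1)}. rho (eh_d k a') x)"
    by (simp add: opEh_def fun_eq_iff)
  have hE: "module_hom scale scale (opE r t rho k)" unfolding opE_eq by (rule ophom) (rule DE)
  have hEh: "module_hom scale scale (opEh r t rho k)" unfolding opEh_eq by (rule ophom) (rule DEh)
  have vE: "opE r t rho k v = rho (e_d k a) v" if "rho (id_d a) v = v" for v
    unfolding opE_eq using single[of "e_d k", OF _ that] DE by (auto simp: e_d_def)
  have vEh: "opEh r t rho k v = rho (eh_d k a) v" if "rho (id_d a) v = v" for v
    unfolding opEh_eq using single[of "eh_d k", OF _ that] DEh by (auto simp: eh_d_def)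
  have annE: "\<And>x. opE r t rho k (Y k x + Y (k + 1) x) = 0" using ann by blast
  have annEh: "\<And>x. opEh r t rho k (Y k x + Y (k + 1) x) = 0" using ann by blast
  have annE2: "\<And>x. Y k (opE r t rho k x) + Y (k + 1) (opE r t rho k x) = 0" using ann by blast
  have annEh2: "\<And>x. Y k (opEh r t rho k x) + Y (k + 1) (opEh r t rho k x) = 0" using ann by blast
  have vprops: "rho (id_d a) v = v \<and> (\<forall>j\<in>{1..n}. \<exists>N. ((\<lambda>x. Y j x - scale (i j) x)^^N) v = 0)"
    if "v \<in> wsp r t scale rho Y a i" for v
    using that by (simp add: wsp_def n_def)
  have genB: "F v \<in> module.span scale (\<Union>i'\<in>I. wsp r t scale rho Y b i')"
    if hF: "module_hom scale scale F" and b: "b \<in> Seq r t"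
      and FY: "\<And>j x. j \<in> {1..n} \<Longrightarrow> j \<noteq> k \<Longrightarrow> j \<noteq> k + 1 \<Longrightarrow> Y j (F x) = F (Y j x)"
      and Fk: "\<And>x. Y k (F x) + Y (k + 1) (F x) = 0"
      and Fb: "rho (id_d b) (F v) = F v"
      and v: "v \<in> wsp r t scale rho Y a i" for F b v
  proof -
    have wj: "\<exists>N. ((\<lambda>x. Y j x - scale (i j) x)^^N) (F v) = 0" if j: "j \<in> {1..n} - {k, k + 1}" for j
    proof -
      have jn: "j \<in> {1..n}" using j by auto
      obtain N where N: "((\<lambda>x. Y j x - scale (i j) x)^^N) v = 0" using vprops[OF v] jn by blast
      have c1: "(\<lambda>x. Y j x - scale (i j) x) (F x) = F ((\<lambda>x. Y j x - scale (i j) x) x)" for x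
        using V.comm_shift[OF hF, of "Y j" x "i j"] FY[of j] jn j by auto
      have "((\<lambda>x. Y j x - scale (i j) x)^^N) (F v) = F (((\<lambda>x. Y j x - scale (i j) x)^^N) v)"
        by (rule V.comm_funpow) (rule c1)
      also have "\<dots> = 0" using N by (simp add: module_hom.zero[OF hF])
      finally show ?thesis by blast
    qed
    have "F v \<in> module.span scale {u. \<exists>l. rho (id_d b) u = u \<and>
            (\<forall>j\<in>{1..n}. \<exists>N. ((\<lambda>x. Y j x - scale ((i(k:=l, k+1:=-l)) j) x)^^N) u = 0)}"
      by (rule partB[OF FD Ylin Ycomm lin[OF Did[OF b]] Yid[OF kn(1) b] k1 Fb wj Fk])
    moreover have "{u. \<exists>l. rho (id_d b) u = u \<and>
            (\<forall>j\<in>{1..n}. \<exists>N. ((\<lambda>x. Y j x - scale ((i(k:=l, k+1:=-l)) j) x)^^N) u = 0)}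
          \<subseteq> (\<Union>i'\<in>I. wsp r t scale rho Y b i')"
    proof clarify
      fix u l
      assume u: "rho (id_d b) u = u"
        "\<forall>j\<in>{1..n}. \<exists>N. ((\<lambda>x. Y j x - scale ((i(k:=l, k+1:=-l)) j) x)^^N) u = 0"
      have "i(k:=l, k+1:=-l) \<in> I" unfolding I_def by auto
      moreover have "u \<in> wsp r t scale rho Y b (i(k:=l, k+1:=-l))"
        using u by (simp add: wsp_def n_def)
      ultimately show "u \<in> (\<Union>i'\<in>I. wsp r t scale rho Y b i')" by blast
    qed
    ultimately show ?thesis using V.span_mono by blast
  qed
  show ?thesis
  proof (intro conjI impI ballI)
    fix v assume c: "i k + i (k + 1) \<noteq> 0" and v: "v \<in> wsp r t scale rho Y a i"
    obtain N1 where N1: "((\<lambda>x. Y k x - scale (i k) x)^^N1) v = 0" using vprops[OF v] kn by blast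
    obtain N2 where N2: "((\<lambda>x. Y (k+1) x - scale (i (k+1)) x)^^N2) v = 0" using vprops[OF v] kn by blast
    have "opE r t rho k v = 0"
      by (rule V.partA[OF hE Ylin[OF kn(1)] Ylin[OF kn(2)] Ycomm[OF kn(1) kn(2)] annE c N1 N2])
    then show "rho (e_d k a) v = 0" using vE vprops[OF v] by simp
  next
    fix v assume c: "i k + i (k + 1) \<noteq> 0" and v: "v \<in> wsp r t scale rho Y a i"
    obtain N1 where N1: "((\<lambda>x. Y k x - scale (i k) x)^^N1) v = 0" using vprops[OF v] kn by blast
    obtain N2 where N2: "((\<lambda>x. Y (k+1) x - scale (i (k+1)) x)^^N2) v = 0" using vprops[OF v] kn by blast
    have "opEh r t rho k v = 0"
      by (rule V.partA[OF hEh Ylin[OF kn(1)] Ylin[OF kn(2)] Ycomm[OF kn(1) kn(2)] annEh c N1 N2])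
    then show "rho (eh_d k a) v = 0" using vEh vprops[OF v] by simp
  next
    fix v assume v: "v \<in> wsp r t scale rho Y a i"
    have eq: "opE r t rho k v = rho (e_d k a) v" using vE vprops[OF v] by simp
    have "rho (id_d a) (opE r t rho k v) = opE r t rho k v"
      unfolding eq by (rule tgt) (use DE[OF a ak] a in \<open>auto simp: e_d_def\<close>)
    from genB[OF hE a _ annE2 this v] Yops
    show "rho (e_d k a) v \<in> module.span scale (\<Union>i'\<in>I. wsp r t scale rho Y a i')"
      unfolding eq by blast
  next
    fix v assume v: "v \<in> wsp r t scale rho Y a i"
    have eq: "opEh r t rho k v = rho (eh_d k a) v" using vEh vprops[OF v] by simp
    have "rho (id_d (seq_swap k a)) (opEh r t rho k v) = opEh r t rho k v"
      unfolding eq by (rule tgt) (use DEh[OF a ak] ssa in \<open>auto simp: eh_d_def\<close>)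
    from genB[OF hEh ssa _ annEh2 this v] Yops
    show "rho (eh_d k a) v \<in> module.span scale (\<Union>i'\<in>I. wsp r t scale rho Y (seq_swap k a) i')"
      unfolding eq by blast
  qed
qed


end
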